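(* Let $d\ge 11$ and set $$\alpha_{-}=2-2\sqrt{\frac{d-4}{3(d-2)}},\qquad \beta_{-}=\frac{2}{3}(d-4)-\frac{1}{3}\sqrt{3(d-2)(d-4)},\qquad u_{-}(y)=1-\frac{\alpha_{-}y^{2}}{y^{2}+\beta_{-}}.$$ Then $u_-\in C^\infty([0,1])$ and $u_-$ solves $$y^{2}(1-y^{2})u''(y)+\big((d-3)y-2y^{3}\big)u'(y)+(d-2)\,u(y)\big(1-u(y)^{2}\big)=0\quad\text{on } [0,1].$$
   Context: Here $d$ denotes the spatial dimension (an integer). Smoothness on $[0,1]$ means one-sided derivatives of all orders exist and are continuous up to the endpoints. *)

theory Defs
  imports "HOL-Analysis.Analysis"
begin

definition smooth_deriv_seq :: "real set \<Rightarrow> (real \<Rightarrow> real) \<Rightarrow> (nat \<Rightarrow> real \<Rightarrow> real) \<Rightarrow> bool" where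
  "smooth_deriv_seq S f D \<longleftrightarrow>
     (\<forall>x\<in>S. D 0 x = f x) \<and>
     (\<forall>k. \<forall>x\<in>S. (D k has_real_derivative D (Suc k) x) (at x within S)) \<and>
     (\<forall>k. continuous_on S (D k))"

definition C_infty_on :: "real set \<Rightarrow> (real \<Rightarrow> real) \<Rightarrow> bool" where
  "C_infty_on S f \<longleftrightarrow> (\<exists>D. smooth_deriv_seq S f D)"

definition alpha_minus :: "int \<Rightarrow> real" where
  "alpha_minus d = 2 - 2 * sqrt ((real_of_int d - 4) / (3 * (real_of_int d - 2)))"

definition beta_minus :: "int \<Rightarrow> real" where
  "beta_minus d = (2/3) * (real_of_int d - 4)
     - (1/3) * sqrt (3 * (real_of_int d - 2) * (real_of_int d - 4))"

definition u_minus :: "int \<Rightarrow> real \<Rightarrow> real" where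
  "u_minus d y = 1 - alpha_minus d * y\<^sup>2 / (y\<^sup>2 + beta_minus d)"

end

theory Submission imports Defs "HOL-Computational_Algebra.Polynomial" begin
fun PP :: "real \<Rightarrow> nat \<Rightarrow> real poly" where
  "PP b 0 = 1"
| "PP b (Suc k) = pderiv (PP b k) * [:b,0,1:] - smult (real (Suc k)) (PP b k * [:0,2:])"

definition EE :: "real \<Rightarrow> nat \<Rightarrow> real \<Rightarrow> real" where
  "EE b k y = poly (PP b k) y / (y^2+b)^(Suc k)"

lemma EE_deriv:
  assumes b: "b > 0"
  shows "(EE b k has_real_derivative EE b (Suc k) y) (at y)"
proof -
  have q: "y^2 + b > 0" using b by (simp add: add_nonneg_pos)
  have "((\<lambda>y. poly (PP b k) y / (y^2+b)^(Suc k)) has_real_derivative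
     (poly (pderiv (PP b k)) y * (y^2+b)^(Suc k) - poly (PP b k) y * (real (Suc k) * (y^2+b)^k * (2*y))) / ((y^2+b)^(Suc k) * (y^2+b)^(Suc k))) (at y)"
    apply (rule DERIV_divide)
      apply (rule poly_DERIV)
    using q apply (auto intro!: derivative_eq_intros simp: power2_eq_square)
    apply (cases k) apply (auto simp: algebra_simps)
    done
  also have "(poly (pderiv (PP b k)) y * (y^2+b)^(Suc k) - poly (PP b k) y * (real (Suc k) * (y^2+b)^k * (2*y))) / ((y^2+b)^(Suc k) * (y^2+b)^(Suc k))
      = EE b (Suc k) y"
  proof -
    define Q where "Q = y^2+b"
    have Q: "Q \<noteq> 0" using q Q_def by simp
    have "(poly (pderiv (PP b k)) y * Q^(Suc k) - poly (PP b k) y * (real (Suc k) * Q^k * (2*y))) / (Q^(Suc k) * Q^(Suc k))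
       = (Q^k * (poly (pderiv (PP b k)) y * Q - real (Suc k) * poly (PP b k) y * (2*y))) / (Q^k * Q^(Suc (Suc k)))"
      by (simp add: algebra_simps)
    also have "\<dots> = (poly (pderiv (PP b k)) y * Q - real (Suc k) * poly (PP b k) y * (2*y)) / Q^(Suc (Suc k))"
      using Q by simp
    also have "\<dots> = EE b (Suc k) y" by (simp add: EE_def Q_def algebra_simps power2_eq_square)
    finally show ?thesis unfolding Q_def .
  qed
  finally show ?thesis unfolding EE_def[abs_def] .
qed

lemma PP12: "poly (PP b 1) y = -2*y" "poly (PP b 2) y = -2*(y^2+b) + 8*y^2"
  by (simp_all add: numeral_2_eq_2 pderiv_pCons algebra_simps power2_eq_square)
lemma ode_alg:
  fixes y t dd :: real
  assumes rel: "3*(dd-2)*t^2 = dd - 4" and qnz: "y^2 + ((2/3)*(dd-4) - (dd-2)*t) \<noteq> 0"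
  defines "a \<equiv> 2 - 2*t" and "b \<equiv> (2/3)*(dd-4) - (dd-2)*t"
  shows "y^2 * (1 - y^2) * (a*b*((-2*(y^2+b) + 8*y^2)/(y^2+b)^3)) + ((dd - 3) * y - 2 * y ^ 3) * (a*b*(-2*y/(y^2+b)^2))
         + (dd - 2) * (1 - a*y^2/(y^2+b)) * (1 - (1 - a*y^2/(y^2+b))\<^sup>2) = 0"
proof -
  define w where "w = 1/(y^2+b)"
  have q: "y^2+b \<noteq> 0" using qnz b_def by simp
  have wq: "w*(y^2+b) = 1" using q w_def by simp
  have "y^2 * (1 - y^2) * (a*b*((-2*(y^2+b) + 8*y^2)/(y^2+b)^3)) + ((dd - 3) * y - 2 * y ^ 3) * (a*b*(-2*y/(y^2+b)^2))
         + (dd - 2) * (1 - a*y^2/(y^2+b)) * (1 - (1 - a*y^2/(y^2+b))\<^sup>2) =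
     y^2 * (1 - y^2) * (a*b*((-2*(y^2+b) + 8*y^2)*w^3)) + ((dd - 3) * y - 2 * y ^ 3) * (a*b*(-2*y*w^2))
         + (dd - 2) * (1 - a*y^2*w) * (1 - (1 - a*y^2*w)\<^sup>2)"
    by (simp add: w_def divide_inverse power_inverse)
  also have "\<dots> = 0" using rel wq unfolding a_def b_def by algebra
  finally show ?thesis .
qed

theorem mainTheorem3:
  fixes d :: int
  assumes "d \<ge> 11"
  shows "C_infty_on {0..1} (u_minus d) \<and>
    (\<exists>D. smooth_deriv_seq {0..1} (u_minus d) D \<and>
      (\<forall>y\<in>{0..1::real}.
         y\<^sup>2 * (1 - y\<^sup>2) * D 2 y + ((real_of_int d - 3) * y - 2 * y ^ 3) * D 1 y
         + (real_of_int d - 2) * u_minus d y * (1 - (u_minus d y)\<^sup>2) = 0))"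
proof -
  define dd where "dd = real_of_int d"
  have dd: "dd \<ge> 11" using assms dd_def by simp
  define t where "t = sqrt ((dd-4)/(3*(dd-2)))"
  have t0: "t \<ge> 0" using dd t_def by simp
  have t2: "t^2 = (dd-4)/(3*(dd-2))" using dd t_def by simp
  have rel: "3*(dd-2)*t^2 = dd - 4" using t2 dd by (simp add: field_simps)
  have sq: "sqrt (3*(dd-2)*(dd-4)) = 3*(dd-2)*t"
  proof -
    have "3*(dd-2)*(dd-4) = (3*(dd-2))^2 * ((dd-4)/(3*(dd-2)))" using dd by (simp add: field_simps power2_eq_square)
    then have "sqrt (3*(dd-2)*(dd-4)) = sqrt ((3*(dd-2))^2 * ((dd-4)/(3*(dd-2))))" by (rule arg_cong)
    also have "\<dots> = sqrt ((3*(dd-2))^2) * t" unfolding t_def by (rule real_sqrt_mult)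
    also have "sqrt ((3*(dd-2))^2) = 3*(dd-2)" using dd by simp
    finally show ?thesis .
  qed
  define a where "a = 2 - 2*t"
  define b where "b = (2/3)*(dd-4) - (dd-2)*t"
  have ad: "alpha_minus d = a" unfolding alpha_minus_def a_def t_def dd_def by simp
  have bd: "beta_minus d = b" unfolding beta_minus_def b_def using sq by (simp add: dd_def)
  have b0: "b > 0"
  proof (rule ccontr)
    assume "\<not> b > 0"
    then have h: "(dd-2)*t \<ge> (2/3)*(dd-4)" unfolding b_def by simp
    have "((2/3)*(dd-4))^2 \<le> ((dd-2)*t)^2" using h dd by (intro power_mono) auto
    also have "\<dots> = (dd-2)*(3*(dd-2)*t^2)/3" by (simp add: power2_eq_square)
    also have "\<dots> = (dd-2)*(dd-4)/3" by (simp only: rel)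
    finally have "(4/9)*(dd-4)*(dd-4) \<le> (1/3)*(dd-2)*(dd-4)" by (simp add: power2_eq_square algebra_simps)
    then have "(4/9)*(dd-4) \<le> (1/3)*(dd-2)" using dd by (simp add: mult_le_cancel_right)
    then show False using dd by simp
  qed
  have u: "u_minus d y = 1 - a*y^2/(y^2+b)" for y unfolding u_minus_def ad bd ..
  have qpos: "y^2 + b > 0" for y :: real using b0 by (simp add: add_nonneg_pos)
  define D where "D = (\<lambda>k y. (if k = 0 then 1 - a else 0) + a*b*EE b k y)"
  have Dder: "(D k has_real_derivative D (Suc k) y) (at y)" for k y
    unfolding D_def by (auto intro!: derivative_eq_intros EE_deriv b0)
  have sm: "smooth_deriv_seq {0..1} (u_minus d) D"
    unfolding smooth_deriv_seq_def
  proof (intro conjI ballI allI)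
    fix x :: real
    show "D 0 x = u_minus d x" unfolding u D_def EE_def using qpos[of x]
      by (simp add: field_simps)
  next
    fix k and x :: real
    show "(D k has_real_derivative D (Suc k) x) (at x within {0..1})"
      using Dder by (rule has_field_derivative_at_within)
  next
    fix k
    show "continuous_on {0..1} (D k)"
      using Dder by (intro continuous_at_imp_continuous_on ballI DERIV_isCont) 
  qed
  have D1: "D 1 y = a*b*(-2*y/(y^2+b)^2)" for y
    unfolding D_def EE_def PP12 by (simp add: power2_eq_square)
  have D2: "D 2 y = a*b*((-2*(y^2+b) + 8*y^2)/(y^2+b)^3)" for y
    unfolding D_def EE_def PP12 by (simp add: numeral_2_eq_2 power3_eq_cube)
  show ?thesis
  proof (intro conjI exI[of _ D] ballI)
    show "C_infty_on {0..1} (u_minus d)" using sm unfolding C_infty_on_def by blast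
    show "smooth_deriv_seq {0..1} (u_minus d) D" by (rule sm)
  next
    fix y :: real
    have "y^2 + ((2/3)*(dd-4) - (dd-2)*t) \<noteq> 0" using qpos[of y] b_def by simp
    from ode_alg[OF rel this]
    show "y\<^sup>2 * (1 - y\<^sup>2) * D 2 y + ((real_of_int d - 3) * y - 2 * y ^ 3) * D 1 y
         + (real_of_int d - 2) * u_minus d y * (1 - (u_minus d y)\<^sup>2) = 0"
      unfolding D1 D2 u a_def b_def dd_def .
  qed
qed

end
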